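(* Let $\Gamma$ be a $W$-generic metric graph, with $W:\Gamma\to\mathbb{R}$ of class $C^1$, and let $f_k$, $\lambda_k$ be the eigenfunctions and eigenvalues of $H_W=-\frac{\partial^2}{\partial x^2}+W$ with Dirichlet boundary and Neumann–Kirchhoff vertex conditions. Let $k_1<\dots<k_M$ and nonzero reals $a_1,\dots,a_M$ be given, and define $g(x,y)=\sum_{i=1}^{M}a_ie^{-\lambda_{k_i}y}f_{k_i}(x)$ for $x\in\Gamma$, $y\in\mathbb{R}$, and $F_y(x):=g(x,y)$. Then for every $y\in\mathbb{R}$, $F_y$ is not identically zero on any open subset of $\Gamma$.
   Context: A metric graph is connected with finitely many edges of finite length, each identified with an interval. $H_W$ acts edgewise on $\bigoplus_e H^2(e)$ with Dirichlet conditions at degree-one vertices and, at inner vertices (degree $\ge2$), continuity and vanishing sum of the outgoing derivatives. Eigenvalues $\lambda_1\le\lambda_2\le\dots$ are counted with multiplicity, with $L^2$-orthogonal eigenfunctions $f_k$. $\Gamma$ is $W$-generic if no eigenfunction of $H_W$ vanishes at an inner vertex (so all eigenvalues are simple). *)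

theory Defs
  imports "HOL-Analysis.Analysis"
begin

text \<open>A metric graph: a finite nonempty set E of edges; edge e is identified with
  the interval [0, len e], the point 0 being the vertex src e and the point len e the
  vertex tgt e. Loops and multiple edges are allowed.\<close>

definition graph_vertices :: "'e set \<Rightarrow> ('e \<Rightarrow> 'v) \<Rightarrow> ('e \<Rightarrow> 'v) \<Rightarrow> 'v set" where
  "graph_vertices E src tgt = src ` E \<union> tgt ` E"

definition vdegree :: "'e set \<Rightarrow> ('e \<Rightarrow> 'v) \<Rightarrow> ('e \<Rightarrow> 'v) \<Rightarrow> 'v \<Rightarrow> nat" where
  "vdegree E src tgt v = card {e\<in>E. src e = v} + card {e\<in>E. tgt e = v}"

definition metric_graph :: "'e set \<Rightarrow> ('e \<Rightarrow> 'v) \<Rightarrow> ('e \<Rightarrow> 'v) \<Rightarrow> ('e \<Rightarrow> real) \<Rightarrow> bool" where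
  "metric_graph E src tgt len \<longleftrightarrow>
     finite E \<and> E \<noteq> {} \<and> (\<forall>e\<in>E. 0 < len e) \<and>
     (\<forall>u\<in>graph_vertices E src tgt. \<forall>v\<in>graph_vertices E src tgt.
        (\<lambda>a b. \<exists>e\<in>E. (src e = a \<and> tgt e = b) \<or> (src e = b \<and> tgt e = a))\<^sup>*\<^sup>* u v)"

text \<open>Points of the graph: pairs (e, x) with x in [0, len e]; two such pairs denote the
  same point of the graph iff they are equal or both are ends at the same vertex.\<close>

definition graph_points :: "'e set \<Rightarrow> ('e \<Rightarrow> real) \<Rightarrow> ('e \<times> real) set" where
  "graph_points E len = {(e, x). e \<in> E \<and> x \<in> {0..len e}}"

definition same_point :: "('e \<Rightarrow> 'v) \<Rightarrow> ('e \<Rightarrow> 'v) \<Rightarrow> ('e \<Rightarrow> real) \<Rightarrow> 'e \<times> real \<Rightarrow> 'e \<times> real \<Rightarrow> bool" where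
  "same_point src tgt len p q \<longleftrightarrow>
     p = q \<or>
     (snd p = 0 \<and> snd q = 0 \<and> src (fst p) = src (fst q)) \<or>
     (snd p = 0 \<and> snd q = len (fst q) \<and> src (fst p) = tgt (fst q)) \<or>
     (snd p = len (fst p) \<and> snd q = 0 \<and> tgt (fst p) = src (fst q)) \<or>
     (snd p = len (fst p) \<and> snd q = len (fst q) \<and> tgt (fst p) = tgt (fst q))"

text \<open>Open subsets of the metric graph (quotient topology of the disjoint union of the
  closed edge intervals), represented as saturated sets of parameter pairs.\<close>

definition graph_open :: "'e set \<Rightarrow> ('e \<Rightarrow> 'v) \<Rightarrow> ('e \<Rightarrow> 'v) \<Rightarrow> ('e \<Rightarrow> real) \<Rightarrow> ('e \<times> real) set \<Rightarrow> bool" where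
  "graph_open E src tgt len U \<longleftrightarrow>
     U \<subseteq> graph_points E len \<and>
     (\<forall>p\<in>U. \<forall>q\<in>graph_points E len. same_point src tgt len p q \<longrightarrow> q \<in> U) \<and>
     (\<forall>e\<in>E. openin (top_of_set {0..len e}) {x\<in>{0..len e}. (e, x) \<in> U})"

definition graph_C1 :: "'e set \<Rightarrow> ('e \<Rightarrow> 'v) \<Rightarrow> ('e \<Rightarrow> 'v) \<Rightarrow> ('e \<Rightarrow> real) \<Rightarrow> ('e \<Rightarrow> real \<Rightarrow> real) \<Rightarrow> bool" where
  "graph_C1 E src tgt len W \<longleftrightarrow>
     (\<forall>e\<in>E. \<exists>D. continuous_on {0..len e} D \<and>
        (\<forall>x\<in>{0..len e}. (W e has_real_derivative D x) (at x within {0..len e}))) \<and>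
     (\<forall>p\<in>graph_points E len. \<forall>q\<in>graph_points E len.
        same_point src tgt len p q \<longrightarrow> W (fst p) (snd p) = W (fst q) (snd q))"

text \<open>Eigenfunctions of H_W = -d^2/dx^2 + W with Dirichlet conditions at degree-one
  vertices and Neumann-Kirchhoff conditions (continuity, vanishing sum of outgoing
  derivatives) at inner vertices. The outgoing derivative of edge e at src e is
  phi_e'(0), at tgt e it is -phi_e'(len e).\<close>

definition is_eigenfunction ::
  "'e set \<Rightarrow> ('e \<Rightarrow> 'v) \<Rightarrow> ('e \<Rightarrow> 'v) \<Rightarrow> ('e \<Rightarrow> real) \<Rightarrow> ('e \<Rightarrow> real \<Rightarrow> real) \<Rightarrow>
   ('e \<Rightarrow> real \<Rightarrow> real) \<Rightarrow> real \<Rightarrow> bool" where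
  "is_eigenfunction E src tgt len W \<phi> \<mu> \<longleftrightarrow>
     (\<exists>e\<in>E. \<exists>x\<in>{0..len e}. \<phi> e x \<noteq> 0) \<and>
     (\<exists>d d2.
        (\<forall>e\<in>E. \<forall>x\<in>{0..len e}.
           (\<phi> e has_real_derivative d e x) (at x within {0..len e}) \<and>
           (d e has_real_derivative d2 e x) (at x within {0..len e}) \<and>
           - d2 e x + W e x * \<phi> e x = \<mu> * \<phi> e x) \<and>
        (\<forall>v\<in>graph_vertices E src tgt. vdegree E src tgt v = 1 \<longrightarrow>
           (\<forall>e\<in>E. (src e = v \<longrightarrow> \<phi> e 0 = 0) \<and> (tgt e = v \<longrightarrow> \<phi> e (len e) = 0))) \<and>
        (\<forall>v\<in>graph_vertices E src tgt. 2 \<le> vdegree E src tgt v \<longrightarrow>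
           (\<exists>c. \<forall>e\<in>E. (src e = v \<longrightarrow> \<phi> e 0 = c) \<and> (tgt e = v \<longrightarrow> \<phi> e (len e) = c)) \<and>
           (\<Sum>e\<in>{e\<in>E. src e = v}. d e 0) + (\<Sum>e\<in>{e\<in>E. tgt e = v}. - d e (len e)) = 0))"

definition l2_inner :: "'e set \<Rightarrow> ('e \<Rightarrow> real) \<Rightarrow> ('e \<Rightarrow> real \<Rightarrow> real) \<Rightarrow> ('e \<Rightarrow> real \<Rightarrow> real) \<Rightarrow> real" where
  "l2_inner E len \<phi> \<psi> = (\<Sum>e\<in>E. integral {0..len e} (\<lambda>x. \<phi> e x * \<psi> e x))"

definition eigen_system ::
  "'e set \<Rightarrow> ('e \<Rightarrow> 'v) \<Rightarrow> ('e \<Rightarrow> 'v) \<Rightarrow> ('e \<Rightarrow> real) \<Rightarrow> ('e \<Rightarrow> real \<Rightarrow> real) \<Rightarrow>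
   (nat \<Rightarrow> real) \<Rightarrow> (nat \<Rightarrow> 'e \<Rightarrow> real \<Rightarrow> real) \<Rightarrow> bool" where
  "eigen_system E src tgt len W lam f \<longleftrightarrow>
     mono lam \<and>
     (\<forall>k. is_eigenfunction E src tgt len W (f k) (lam k)) \<and>
     (\<forall>j k. j \<noteq> k \<longrightarrow> l2_inner E len (f j) (f k) = 0) \<and>
     (\<forall>\<phi> \<mu>. is_eigenfunction E src tgt len W \<phi> \<mu> \<longrightarrow>
        finite {k. lam k = \<mu>} \<and>
        (\<exists>c. \<forall>e\<in>E. \<forall>x\<in>{0..len e}. \<phi> e x = (\<Sum>k\<in>{k. lam k = \<mu>}. c k * f k e x)))"

definition W_generic :: "'e set \<Rightarrow> ('e \<Rightarrow> 'v) \<Rightarrow> ('e \<Rightarrow> 'v) \<Rightarrow> ('e \<Rightarrow> real) \<Rightarrow> ('e \<Rightarrow> real \<Rightarrow> real) \<Rightarrow> bool" where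
  "W_generic E src tgt len W \<longleftrightarrow>
     (\<forall>\<phi> \<mu>. is_eigenfunction E src tgt len W \<phi> \<mu> \<longrightarrow>
        (\<forall>v\<in>graph_vertices E src tgt. 2 \<le> vdegree E src tgt v \<longrightarrow>
           \<not> (\<exists>e\<in>E. (src e = v \<and> \<phi> e 0 = 0) \<or> (tgt e = v \<and> \<phi> e (len e) = 0))))"

end

theory Submission
  imports Defs
begin


lemma deriv_zero_open:
  fixes G :: "real \<Rightarrow> real"
  assumes "open I" "x \<in> I" "\<forall>z\<in>I. G z = 0" "(G has_real_derivative D) (at x)"
  shows "D = 0"
proof -
  have "((\<lambda>_. 0::real) has_real_derivative 0) (at x)" by simp
  hence "(G has_real_derivative 0) (at x)"
    by (rule has_field_derivative_transform_within_open[OF _ assms(1,2)]) (use assms(3) in auto)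
  thus ?thesis using assms(4) DERIV_unique by blast
qed

lemma separation:
  fixes w :: "real \<Rightarrow> real" and mu :: "'a \<Rightarrow> real"
  assumes "finite S" "inj_on mu S" "open I"
  shows "\<And>g d d2. \<forall>s\<in>S. \<forall>x\<in>I. (g s has_real_derivative d s x) (at x) \<and>
            (d s has_real_derivative d2 s x) (at x) \<and> d2 s x = (w x - mu s) * g s x
    \<Longrightarrow> \<forall>x\<in>I. (\<Sum>s\<in>S. g s x) = 0 \<Longrightarrow> \<forall>s\<in>S. \<forall>x\<in>I. g s x = 0"
  using assms(1,2)
proof (induction S rule: finite_induct)
  case empty
  then show ?case by simp
next
  case (insert t S)
  note hyp = insert.prems(1)
  have D1: "((\<lambda>x. \<Sum>s\<in>insert t S. g s x) has_real_derivative (\<Sum>s\<in>insert t S. d s x)) (at x)"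
    if "x \<in> I" for x
    by (rule DERIV_sum) (use hyp that in auto)
  have D2: "((\<lambda>x. \<Sum>s\<in>insert t S. d s x) has_real_derivative (\<Sum>s\<in>insert t S. d2 s x)) (at x)"
    if "x \<in> I" for x
    by (rule DERIV_sum) (use hyp that in auto)
  have Z1: "\<forall>x\<in>I. (\<Sum>s\<in>insert t S. d s x) = 0"
    using deriv_zero_open[OF assms(3) _ insert.prems(2)] D1 by blast
  have Z2: "(\<Sum>s\<in>insert t S. d2 s x) = 0" if "x \<in> I" for x
    using deriv_zero_open[OF assms(3) that Z1] D2[OF that] by blast
  have M: "(\<Sum>s\<in>insert t S. mu s * g s x) = 0" if "x \<in> I" for x
  proof -
    have "(\<Sum>s\<in>insert t S. d2 s x) = (\<Sum>s\<in>insert t S. w x * g s x - mu s * g s x)"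
      using hyp that by (intro sum.cong) (auto simp: algebra_simps)
    also have "\<dots> = w x * (\<Sum>s\<in>insert t S. g s x) - (\<Sum>s\<in>insert t S. mu s * g s x)"
      by (simp add: sum_subtractf sum_distrib_left)
    finally show ?thesis using Z2[OF that] insert.prems(2) that by simp
  qed
  define h where "h s x = (mu s - mu t) * g s x" for s x
  have "\<forall>s\<in>S. \<forall>x\<in>I. h s x = 0"
  proof (rule insert.IH)
    show "\<forall>s\<in>S. \<forall>x\<in>I. (h s has_real_derivative (mu s - mu t) * d s x) (at x) \<and>
            ((\<lambda>x. (mu s - mu t) * d s x) has_real_derivative (mu s - mu t) * d2 s x) (at x) \<and>
            (mu s - mu t) * d2 s x = (w x - mu s) * h s x"
    proof (intro ballI conjI)
      fix s x assume sx: "s \<in> S" "x \<in> I"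
      then have P: "(g s has_real_derivative d s x) (at x)" "(d s has_real_derivative d2 s x) (at x)"
          "d2 s x = (w x - mu s) * g s x" using hyp sx by blast+
      show "(h s has_real_derivative (mu s - mu t) * d s x) (at x)"
        unfolding h_def[abs_def] using DERIV_cmult[OF P(1)] by simp
      show "((\<lambda>x. (mu s - mu t) * d s x) has_real_derivative (mu s - mu t) * d2 s x) (at x)"
        using DERIV_cmult[OF P(2)] by simp
      show "(mu s - mu t) * d2 s x = (w x - mu s) * h s x" using P(3) by (simp add: h_def)
    qed
    show "\<forall>x\<in>I. (\<Sum>s\<in>S. h s x) = 0"
    proof
      fix x assume x: "x \<in> I"
      have "(\<Sum>s\<in>S. h s x) = (\<Sum>s\<in>insert t S. h s x)" using insert.hyps by (simp add: h_def)
      also have "\<dots> = (\<Sum>s\<in>insert t S. mu s * g s x) - mu t * (\<Sum>s\<in>insert t S. g s x)"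
        by (simp add: h_def algebra_simps sum_subtractf sum_distrib_left)
      finally show "(\<Sum>s\<in>S. h s x) = 0" using M[OF x] insert.prems(2) x by simp
    qed
    show "inj_on mu S" using insert.prems(3) by auto
  qed
  hence gS: "\<forall>s\<in>S. \<forall>x\<in>I. g s x = 0"
  proof (intro ballI)
    fix s x assume H: "\<forall>s\<in>S. \<forall>x\<in>I. h s x = 0" and sx: "s \<in> S" "x \<in> I"
    have "mu s \<noteq> mu t" using insert.prems(3) insert.hyps(2) sx(1)
      by (metis inj_on_contraD insertCI)
    moreover have "(mu s - mu t) * g s x = 0" using H sx unfolding h_def by blast
    ultimately show "g s x = 0" by simp
  qed
  moreover have "\<forall>x\<in>I. g t x = 0"
    using insert.prems(2) gS insert.hyps by simp
  ultimately show ?case by auto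
qed




lemma energy_bound:
  fixes a b c K :: real
  assumes "\<bar>c\<bar> \<le> K"
  shows "\<bar>2*a*b*(1+c)\<bar> \<le> (a*a+b*b)*(1+K)"
proof -
  have 1: "\<bar>2*a*b\<bar> \<le> a*a+b*b"
  proof -
    have "2*\<bar>a\<bar>*\<bar>b\<bar> \<le> \<bar>a\<bar>^2+\<bar>b\<bar>^2" by (rule sum_squares_bound)
    thus ?thesis by (simp add: abs_mult power2_eq_square)
  qed
  have 2: "\<bar>1+c\<bar> \<le> 1+K" using assms by linarith
  have "\<bar>2*a*b*(1+c)\<bar> = \<bar>2*a*b\<bar> * \<bar>1+c\<bar>" by (simp add: abs_mult)
  also have "\<dots> \<le> (a*a+b*b)*(1+K)"
    by (rule mult_mono[OF 1 2]) auto
  finally show ?thesis .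
qed

lemma ode_unique:
  fixes g d d2 w :: "real \<Rightarrow> real" and L mu x0 :: real
  assumes contw: "continuous_on {0..L} w"
    and der: "\<forall>x\<in>{0..L}. (g has_real_derivative d x) (at x within {0..L}) \<and>
        (d has_real_derivative d2 x) (at x within {0..L}) \<and> d2 x = (w x - mu) * g x"
    and x0: "x0 \<in> {0..L}" "g x0 = 0" "d x0 = 0"
  shows "\<forall>x\<in>{0..L}. g x = 0"
proof -
  have "compact ((\<lambda>x. w x - mu) ` {0..L})"
    by (intro compact_continuous_image continuous_intros contw) auto
  then obtain B where B: "\<forall>x\<in>{0..L}. \<bar>w x - mu\<bar> \<le> B"
    by (auto dest!: compact_imp_bounded simp: bounded_iff)
  define C where "C = 1 + B"
  define En where "En x = g x * g x + d x * d x" for x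
  have contg: "continuous_on {0..L} g" by (rule DERIV_continuous_on) (use der in blast)
  have contd: "continuous_on {0..L} d" by (rule DERIV_continuous_on) (use der in blast)
  have contEn: "continuous_on {0..L} En" unfolding En_def[abs_def]
    by (intro continuous_intros contg contd)
  have En_nonneg: "En x \<ge> 0" for x unfolding En_def by simp
  have dEn: "(En has_real_derivative (2 * g x * d x * (1 + (w x - mu)))) (at x)"
    if "0 < x" "x < L" for x
  proof -
    have ww: "at x within {0..L} = at x" using that by (intro at_within_interior) auto
    have P: "(g has_real_derivative d x) (at x)" "(d has_real_derivative d2 x) (at x)"
      "d2 x = (w x - mu) * g x" using der[rule_format, of x] that ww by auto
    have "(En has_real_derivative (d x * g x + g x * d x + (d2 x * d x + d x * d2 x))) (at x)"
      unfolding En_def[abs_def] using DERIV_add[OF DERIV_mult[OF P(1) P(1)] DERIV_mult[OF P(2) P(2)]] by simp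
    thus ?thesis using P(3) by (simp add: algebra_simps)
  qed
  have bnd: "\<bar>2 * g x * d x * (1 + (w x - mu))\<bar> \<le> En x * C" if "x \<in> {0..L}" for x
    unfolding En_def C_def by (rule energy_bound) (use B that in auto)
  have fwd: "g x = 0" if "x0 \<le> x" "x \<le> L" for x
  proof -
    define phi where "phi z = En z * exp (- C * z)" for z
    have "phi x0 \<ge> phi x"
    proof (rule DERIV_nonpos_imp_decreasing_open[OF that(1)])
      show "continuous_on {x0..x} phi" unfolding phi_def[abs_def]
        by (intro continuous_intros continuous_on_subset[OF contEn]) (use x0 that in auto)
      fix z assume z: "x0 < z" "z < x"
      have z0: "0 < z" "z < L" using z x0 that by auto
      have ee: "((\<lambda>z. exp (CC * z)) has_real_derivative exp (CC * z) * CC) (at z)" for CC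
        by (auto intro!: derivative_eq_intros)
      have "(phi has_real_derivative (2 * g z * d z * (1 + (w z - mu)) * exp (- C * z) + En z * (exp (- C * z) * (- C)))) (at z)"
        unfolding phi_def[abs_def]
        using DERIV_mult[OF dEn[OF z0] ee[of "- C"]] by (simp add: algebra_simps)
      moreover have "2 * g z * d z * (1 + (w z - mu)) * exp (- C * z) + En z * (exp (- C * z) * (- C)) \<le> 0"
      proof -
        have "2 * g z * d z * (1 + (w z - mu)) \<le> En z * C" using bnd[of z] z0 by auto
        hence "(2 * g z * d z * (1 + (w z - mu)) - En z * C) * exp (- C * z) \<le> 0"
          by (intro mult_nonpos_nonneg) auto
        thus ?thesis by (simp add: algebra_simps)
      qed
      ultimately show "\<exists>y. (phi has_real_derivative y) (at z) \<and> y \<le> 0" by blast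
    qed
    moreover have "phi x0 = 0" using x0 by (simp add: phi_def En_def)
    moreover have "phi x \<ge> 0" using En_nonneg by (simp add: phi_def)
    ultimately have "En x = 0" by (simp add: phi_def)
    thus ?thesis unfolding En_def by simp
  qed
  have bwd: "g x = 0" if "0 \<le> x" "x \<le> x0" for x
  proof -
    define phi where "phi z = En z * exp (C * z)" for z
    have "phi x \<le> phi x0"
    proof (rule DERIV_nonneg_imp_increasing_open[OF that(2)])
      show "continuous_on {x..x0} phi" unfolding phi_def[abs_def]
        by (intro continuous_intros continuous_on_subset[OF contEn]) (use x0 that in auto)
      fix z assume z: "x < z" "z < x0"
      have z0: "0 < z" "z < L" using z x0 that by auto
      have ee: "((\<lambda>z. exp (CC * z)) has_real_derivative exp (CC * z) * CC) (at z)" for CC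
        by (auto intro!: derivative_eq_intros)
      have "(phi has_real_derivative (2 * g z * d z * (1 + (w z - mu)) * exp (C * z) + En z * (exp (C * z) * C))) (at z)"
        unfolding phi_def[abs_def]
        using DERIV_mult[OF dEn[OF z0] ee[of C]] by (simp add: algebra_simps)
      moreover have "2 * g z * d z * (1 + (w z - mu)) * exp (C * z) + En z * (exp (C * z) * C) \<ge> 0"
      proof -
        have "- (2 * g z * d z * (1 + (w z - mu))) \<le> En z * C" using bnd[of z] z0 by auto
        hence "(2 * g z * d z * (1 + (w z - mu)) + En z * C) * exp (C * z) \<ge> 0"
          by (intro mult_nonneg_nonneg) auto
        thus ?thesis by (simp add: algebra_simps)
      qed
      ultimately show "\<exists>y. (phi has_real_derivative y) (at z) \<and> y \<ge> 0" by blast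
    qed
    moreover have "phi x0 = 0" using x0 by (simp add: phi_def En_def)
    moreover have "phi x \<ge> 0" using En_nonneg by (simp add: phi_def)
    ultimately have "En x = 0" by (simp add: phi_def)
    thus ?thesis unfolding En_def by simp
  qed
  show ?thesis
  proof
    fix x assume "x \<in> {0..L}"
    thus "g x = 0" using fwd bwd by (cases "x0 \<le> x") auto
  qed
qed




definition eig_data where
  "eig_data E src tgt len W \<phi> \<mu> d d2 \<longleftrightarrow>
        (\<forall>e\<in>E. \<forall>x\<in>{0..len e}.
           (\<phi> e has_real_derivative d e x) (at x within {0..len e}) \<and>
           (d e has_real_derivative d2 e x) (at x within {0..len e}) \<and>
           - d2 e x + W e x * \<phi> e x = \<mu> * \<phi> e x) \<and>
        (\<forall>v\<in>graph_vertices E src tgt. vdegree E src tgt v = 1 \<longrightarrow>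
           (\<forall>e\<in>E. (src e = v \<longrightarrow> \<phi> e 0 = 0) \<and> (tgt e = v \<longrightarrow> \<phi> e (len e) = 0))) \<and>
        (\<forall>v\<in>graph_vertices E src tgt. 2 \<le> vdegree E src tgt v \<longrightarrow>
           (\<exists>c. \<forall>e\<in>E. (src e = v \<longrightarrow> \<phi> e 0 = c) \<and> (tgt e = v \<longrightarrow> \<phi> e (len e) = c)) \<and>
           (\<Sum>e\<in>{e\<in>E. src e = v}. d e 0) + (\<Sum>e\<in>{e\<in>E. tgt e = v}. - d e (len e)) = 0)"

lemma is_eigenfunction_alt:
  "is_eigenfunction E src tgt len W \<phi> \<mu> \<longleftrightarrow>
     (\<exists>e\<in>E. \<exists>x\<in>{0..len e}. \<phi> e x \<noteq> 0) \<and> (\<exists>d d2. eig_data E src tgt len W \<phi> \<mu> d d2)"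
  unfolding is_eigenfunction_def eig_data_def by blast

lemma lincomb_data:
  fixes Ig :: "nat set" and b :: "nat \<Rightarrow> real"
  assumes fin: "finite Ig"
    and ed: "\<forall>i\<in>Ig. eig_data E src tgt len W (\<phi> i) mu (D i) (D2 i)"
  shows "eig_data E src tgt len W (\<lambda>e x. \<Sum>i\<in>Ig. b i * \<phi> i e x) mu
          (\<lambda>e x. \<Sum>i\<in>Ig. b i * D i e x) (\<lambda>e x. \<Sum>i\<in>Ig. b i * D2 i e x)"
    unfolding eig_data_def
  proof (intro conjI)
   show "\<forall>e\<in>E. \<forall>x\<in>{0..len e}. ((\<lambda>x. \<Sum>i\<in>Ig. b i * \<phi> i e x) has_real_derivative (\<Sum>i\<in>Ig. b i * D i e x)) (at x within {0..len e}) \<and>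
     ((\<lambda>x. \<Sum>i\<in>Ig. b i * D i e x) has_real_derivative (\<Sum>i\<in>Ig. b i * D2 i e x)) (at x within {0..len e}) \<and>
     - (\<Sum>i\<in>Ig. b i * D2 i e x) + W e x * (\<Sum>i\<in>Ig. b i * \<phi> i e x) = mu * (\<Sum>i\<in>Ig. b i * \<phi> i e x)"
   proof (intro ballI conjI)
    fix e x assume e: "e \<in> E" and x: "x \<in> {0..len e}"
    have P: "(\<phi> i e has_real_derivative D i e x) (at x within {0..len e})"
       "(D i e has_real_derivative D2 i e x) (at x within {0..len e})"
       "- D2 i e x + W e x * \<phi> i e x = mu * \<phi> i e x" if "i \<in> Ig" for i
      using ed that e x unfolding eig_data_def by blast+
    show "((\<lambda>x. \<Sum>i\<in>Ig. b i * \<phi> i e x) has_real_derivative (\<Sum>i\<in>Ig. b i * D i e x)) (at x within {0..len e})"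
      by (rule DERIV_sum) (intro DERIV_cmult P)
    show "((\<lambda>x. \<Sum>i\<in>Ig. b i * D i e x) has_real_derivative (\<Sum>i\<in>Ig. b i * D2 i e x)) (at x within {0..len e})"
      by (rule DERIV_sum) (intro DERIV_cmult P)
    have "(\<Sum>i\<in>Ig. b i * D2 i e x) = (\<Sum>i\<in>Ig. W e x * (b i * \<phi> i e x) - mu * (b i * \<phi> i e x))"
    proof (rule sum.cong)
      fix i assume "i \<in> Ig"
      from P(3)[OF this] show "b i * D2 i e x = W e x * (b i * \<phi> i e x) - mu * (b i * \<phi> i e x)"
        by (simp add: algebra_simps)
    qed simp
    thus "- (\<Sum>i\<in>Ig. b i * D2 i e x) + W e x * (\<Sum>i\<in>Ig. b i * \<phi> i e x) = mu * (\<Sum>i\<in>Ig. b i * \<phi> i e x)"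
      by (simp add: sum_subtractf sum_distrib_left)
   qed
  next
   show "\<forall>v\<in>graph_vertices E src tgt. vdegree E src tgt v = 1 \<longrightarrow>
           (\<forall>e\<in>E. (src e = v \<longrightarrow> (\<Sum>i\<in>Ig. b i * \<phi> i e 0) = 0) \<and> (tgt e = v \<longrightarrow> (\<Sum>i\<in>Ig. b i * \<phi> i e (len e)) = 0))"
   proof (intro ballI impI)
    fix v e assume v: "v \<in> graph_vertices E src tgt" "vdegree E src tgt v = 1" and e: "e \<in> E"
    have "\<forall>i\<in>Ig. (src e = v \<longrightarrow> \<phi> i e 0 = 0) \<and> (tgt e = v \<longrightarrow> \<phi> i e (len e) = 0)"
      using ed v e unfolding eig_data_def by blast
    thus "(src e = v \<longrightarrow> (\<Sum>i\<in>Ig. b i * \<phi> i e 0) = 0) \<and> (tgt e = v \<longrightarrow> (\<Sum>i\<in>Ig. b i * \<phi> i e (len e)) = 0)"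
      by simp
   qed
  next
   show "\<forall>v\<in>graph_vertices E src tgt. 2 \<le> vdegree E src tgt v \<longrightarrow>
           (\<exists>c. \<forall>e\<in>E. (src e = v \<longrightarrow> (\<Sum>i\<in>Ig. b i * \<phi> i e 0) = c) \<and> (tgt e = v \<longrightarrow> (\<Sum>i\<in>Ig. b i * \<phi> i e (len e)) = c)) \<and>
           (\<Sum>e\<in>{e\<in>E. src e = v}. \<Sum>i\<in>Ig. b i * D i e 0) + (\<Sum>e\<in>{e\<in>E. tgt e = v}. - (\<Sum>i\<in>Ig. b i * D i e (len e))) = 0"
   proof (intro ballI impI conjI)
    fix v assume v: "v \<in> graph_vertices E src tgt" "2 \<le> vdegree E src tgt v"
    have "\<forall>i\<in>Ig. \<exists>c. \<forall>e\<in>E. (src e = v \<longrightarrow> \<phi> i e 0 = c) \<and> (tgt e = v \<longrightarrow> \<phi> i e (len e) = c)"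
      using ed v unfolding eig_data_def by blast
    then obtain c where c: "\<forall>i\<in>Ig. \<forall>e\<in>E. (src e = v \<longrightarrow> \<phi> i e 0 = c i) \<and> (tgt e = v \<longrightarrow> \<phi> i e (len e) = c i)"
      by metis
    show "\<exists>c. \<forall>e\<in>E. (src e = v \<longrightarrow> (\<Sum>i\<in>Ig. b i * \<phi> i e 0) = c) \<and> (tgt e = v \<longrightarrow> (\<Sum>i\<in>Ig. b i * \<phi> i e (len e)) = c)"
      by (rule exI[of _ "\<Sum>i\<in>Ig. b i * c i"]) (use c in simp)
    have K: "\<forall>i\<in>Ig. (\<Sum>e\<in>{e\<in>E. src e = v}. D i e 0) + (\<Sum>e\<in>{e\<in>E. tgt e = v}. - D i e (len e)) = 0"
      using ed v unfolding eig_data_def by blast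
    have "(\<Sum>e\<in>{e\<in>E. src e = v}. \<Sum>i\<in>Ig. b i * D i e 0) + (\<Sum>e\<in>{e\<in>E. tgt e = v}. - (\<Sum>i\<in>Ig. b i * D i e (len e)))
        = (\<Sum>i\<in>Ig. b i * ((\<Sum>e\<in>{e\<in>E. src e = v}. D i e 0) + (\<Sum>e\<in>{e\<in>E. tgt e = v}. - D i e (len e))))"
    proof -
      have s1: "(\<Sum>e\<in>{e\<in>E. src e = v}. \<Sum>i\<in>Ig. b i * D i e 0) = (\<Sum>i\<in>Ig. b i * (\<Sum>e\<in>{e\<in>E. src e = v}. D i e 0))"
        by (subst sum.swap) (simp add: sum_distrib_left)
      have s2: "(\<Sum>e\<in>{e\<in>E. tgt e = v}. \<Sum>i\<in>Ig. b i * D i e (len e)) = (\<Sum>i\<in>Ig. b i * (\<Sum>e\<in>{e\<in>E. tgt e = v}. D i e (len e)))"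
        by (subst sum.swap) (simp add: sum_distrib_left)
      show ?thesis by (simp add: s1 s2 sum_negf right_diff_distrib sum_subtractf)
    qed
    also have "\<dots> = 0" using K by simp
    finally show "(\<Sum>e\<in>{e\<in>E. src e = v}. \<Sum>i\<in>Ig. b i * D i e 0) + (\<Sum>e\<in>{e\<in>E. tgt e = v}. - (\<Sum>i\<in>Ig. b i * D i e (len e))) = 0" .
   qed
  qed





lemma deg_lt2_touch:
  assumes fin: "finite E" and e0: "e0 \<in> E" and v: "src e0 = v \<or> tgt e0 = v"
    and deg: "vdegree E src tgt v < 2"
  shows "\<forall>e\<in>E. (src e = v \<or> tgt e = v) \<longrightarrow> e = e0"
proof -
  define A where "A = {e\<in>E. src e = v}"
  define B where "B = {e\<in>E. tgt e = v}"
  have fA: "finite A" and fB: "finite B" using fin by (auto simp: A_def B_def)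
  have cd: "card A + card B < 2" using deg by (simp add: vdegree_def A_def B_def)
  show ?thesis
  proof (cases "src e0 = v")
    case True
    hence "e0 \<in> A" using e0 by (simp add: A_def)
    hence "card A \<ge> 1" using fA by (metis One_nat_def Suc_leI card_gt_0_iff empty_iff)
    hence "card B = 0" "card A \<le> Suc 0" using cd by auto
    hence "B = {}" "\<forall>a1\<in>A. \<forall>a2\<in>A. a1 = a2" using fB fA card_le_Suc0_iff_eq by auto
    thus ?thesis using \<open>e0 \<in> A\<close> by (auto simp: A_def B_def)
  next
    case False
    hence "tgt e0 = v" using v by auto
    hence "e0 \<in> B" using e0 by (simp add: B_def)
    hence "card B \<ge> 1" using fB by (metis One_nat_def Suc_leI card_gt_0_iff empty_iff)
    hence "card A = 0" "card B \<le> Suc 0" using cd by auto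
    hence "A = {}" "\<forall>a1\<in>B. \<forall>a2\<in>B. a1 = a2" using fB fA card_le_Suc0_iff_eq by auto
    thus ?thesis using \<open>e0 \<in> B\<close> by (auto simp: A_def B_def)
  qed
qed

lemma single_edge:
  assumes mg: "metric_graph E src tgt len" and e0: "e0 \<in> E"
    and d1: "vdegree E src tgt (src e0) < 2" and d2: "vdegree E src tgt (tgt e0) < 2"
  shows "E = {e0}"
proof -
  have fin: "finite E" using mg by (simp add: metric_graph_def)
  have T: "\<forall>e\<in>E. (src e \<in> {src e0, tgt e0} \<or> tgt e \<in> {src e0, tgt e0}) \<longrightarrow> e = e0"
    using deg_lt2_touch[OF fin e0 _ d1] deg_lt2_touch[OF fin e0 _ d2] by blast
  define R where "R = (\<lambda>a b. \<exists>e\<in>E. (src e = a \<and> tgt e = b) \<or> (src e = b \<and> tgt e = a))"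
  have reach: "u \<in> {src e0, tgt e0}" if "R\<^sup>*\<^sup>* (src e0) u" for u
    using that
  proof (induction rule: rtranclp_induct)
    case base then show ?case by simp
  next
    case (step u w)
    then obtain e where "e \<in> E" "(src e = u \<and> tgt e = w) \<or> (src e = w \<and> tgt e = u)"
      unfolding R_def by blast
    with step.IH T have "e = e0" by blast
    with \<open>(src e = u \<and> tgt e = w) \<or> (src e = w \<and> tgt e = u)\<close> show ?case by auto
  qed
  have conn: "\<forall>u\<in>graph_vertices E src tgt. \<forall>v\<in>graph_vertices E src tgt. R\<^sup>*\<^sup>* u v"
    using mg unfolding metric_graph_def R_def by blast
  have "e = e0" if "e \<in> E" for e
  proof -
    have "src e \<in> graph_vertices E src tgt" "src e0 \<in> graph_vertices E src tgt"
      using that e0 by (auto simp: graph_vertices_def)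
    hence "src e \<in> {src e0, tgt e0}" using conn reach by blast
    thus ?thesis using T that by blast
  qed
  thus ?thesis using e0 by blast
qed




lemma l2_lin:
  fixes Ig :: "nat set"
  assumes fin: "finite Ig"
    and cphi: "\<forall>i\<in>Ig. \<forall>e\<in>E. continuous_on {0..len e} (\<phi> i e)"
    and ch: "\<forall>e\<in>E. continuous_on {0..len e} (h e)"
  shows "l2_inner E len (\<lambda>e x. \<Sum>i\<in>Ig. b i * \<phi> i e x) h = (\<Sum>i\<in>Ig. b i * l2_inner E len (\<phi> i) h)"
proof -
  have "integral {0..len e} (\<lambda>x. (\<Sum>i\<in>Ig. b i * \<phi> i e x) * h e x)
        = (\<Sum>i\<in>Ig. b i * integral {0..len e} (\<lambda>x. \<phi> i e x * h e x))" if e: "e \<in> E" for e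
  proof -
    have "integral {0..len e} (\<lambda>x. (\<Sum>i\<in>Ig. b i * \<phi> i e x) * h e x)
        = integral {0..len e} (\<lambda>x. \<Sum>i\<in>Ig. b i * (\<phi> i e x * h e x))"
      by (simp add: sum_distrib_right mult.assoc)
    also have "\<dots> = (\<Sum>i\<in>Ig. integral {0..len e} (\<lambda>x. b i * (\<phi> i e x * h e x)))"
    proof (rule integral_sum[OF fin])
      fix i assume i: "i \<in> Ig"
      show "(\<lambda>x. b i * (\<phi> i e x * h e x)) integrable_on {0..len e}"
        by (intro integrable_continuous_interval continuous_intros)
           (use cphi ch i e in auto)
    qed
    also have "\<dots> = (\<Sum>i\<in>Ig. b i * integral {0..len e} (\<lambda>x. \<phi> i e x * h e x))" by simp
    finally show ?thesis .
  qed
  hence "l2_inner E len (\<lambda>e x. \<Sum>i\<in>Ig. b i * \<phi> i e x) h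
      = (\<Sum>e\<in>E. \<Sum>i\<in>Ig. b i * integral {0..len e} (\<lambda>x. \<phi> i e x * h e x))"
    unfolding l2_inner_def by (intro sum.cong) auto
  also have "\<dots> = (\<Sum>i\<in>Ig. b i * l2_inner E len (\<phi> i) h)"
    unfolding l2_inner_def by (subst sum.swap) (simp add: sum_distrib_left)
  finally show ?thesis .
qed

lemma l2_pos:
  assumes fin: "finite E" and e: "e \<in> E" and x: "x \<in> {0..len e}" and nz: "\<phi> e x \<noteq> 0"
    and lpos: "\<forall>e\<in>E. 0 < len e"
    and c: "\<forall>e\<in>E. continuous_on {0..len e} (\<phi> e)"
  shows "0 < l2_inner E len \<phi> \<phi>"
  unfolding l2_inner_def
proof (rule sum_pos2[OF fin e])
  fix e' assume e': "e' \<in> E"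
  show "0 \<le> integral {0..len e'} (\<lambda>x. \<phi> e' x * \<phi> e' x)"
    by (rule integral_nonneg) (auto intro!: integrable_continuous_interval continuous_intros c[rule_format, OF e'])
next
  have cc: "continuous_on {0..len e} (\<lambda>x. \<phi> e x * \<phi> e x)"
    by (intro continuous_intros) (use c e in auto)
  have ne: "integral {0..len e} (\<lambda>x. \<phi> e x * \<phi> e x) \<noteq> 0"
    using integral_eq_0_iff[OF cc] lpos e x nz by auto
  moreover have "0 \<le> integral {0..len e} (\<lambda>x. \<phi> e x * \<phi> e x)"
    by (rule integral_nonneg) (auto intro!: integrable_continuous_interval cc)
  ultimately show "0 < integral {0..len e} (\<lambda>x. \<phi> e x * \<phi> e x)" by simp
qed


theorem lemma4:
  fixes E :: "'e set" and src tgt :: "'e \<Rightarrow> 'v" and len :: "'e \<Rightarrow> real"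
    and W :: "'e \<Rightarrow> real \<Rightarrow> real"
    and lam :: "nat \<Rightarrow> real" and f :: "nat \<Rightarrow> 'e \<Rightarrow> real \<Rightarrow> real"
    and M :: nat and k :: "nat \<Rightarrow> nat" and a :: "nat \<Rightarrow> real"
    and y :: real and U :: "('e \<times> real) set"
  assumes "metric_graph E src tgt len"
    and "graph_C1 E src tgt len W"
    and "W_generic E src tgt len W"
    and "eigen_system E src tgt len W lam f"
    and "0 < M"
    and "strict_mono_on {..<M} k"
    and "\<forall>i<M. a i \<noteq> 0"
    and "graph_open E src tgt len U" and "U \<noteq> {}"
  shows "\<exists>(e, x)\<in>U. (\<Sum>i<M. a i * exp (- lam (k i) * y) * f (k i) e x) \<noteq> 0"
proof (rule ccontr)
  note mg = assms(1) and C1 = assms(2) and gen = assms(3) and es = assms(4)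
    and M0 = assms(5) and smk = assms(6) and anz = assms(7) and gop = assms(8) and Une = assms(9)
  assume "\<not> ?thesis"
  hence Z0: "\<forall>(e, x)\<in>U. (\<Sum>i<M. a i * exp (- lam (k i) * y) * f (k i) e x) = 0" by auto
  define b where "b i = a i * exp (- lam (k i) * y)" for i
  have bnz: "b i \<noteq> 0" if "i < M" for i using anz that by (simp add: b_def)
  have finE: "finite E" and lpos: "\<forall>e\<in>E. 0 < len e" using mg by (auto simp: metric_graph_def)
  have ES: "\<forall>j. is_eigenfunction E src tgt len W (f j) (lam j)"
    and orth: "\<forall>i j. i \<noteq> j \<longrightarrow> l2_inner E len (f i) (f j) = 0"
    using es by (auto simp: eigen_system_def)
  have "\<forall>j. \<exists>d d2. eig_data E src tgt len W (f j) (lam j) d d2"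
    using ES by (simp add: is_eigenfunction_alt)
  then obtain D D2 where DD: "\<forall>j. eig_data E src tgt len W (f j) (lam j) (D j) (D2 j)"
    by metis
  have cf: "\<forall>j. \<forall>e\<in>E. continuous_on {0..len e} (f j e)"
  proof (intro allI ballI)
    fix j e assume e: "e \<in> E"
    show "continuous_on {0..len e} (f j e)"
    proof (rule DERIV_continuous_on[where D="D j e"])
      fix x assume "x \<in> {0..len e}"
      thus "(f j e has_real_derivative D j e x) (at x within {0..len e})"
        using DD e unfolding eig_data_def by blast
    qed
  qed
  obtain e0 x0 where ex0: "(e0, x0) \<in> U" using Une by auto
  have e0: "e0 \<in> E" and x0: "x0 \<in> {0..len e0}"
    using gop ex0 by (auto simp: graph_open_def graph_points_def)
  define L where "L = len e0"
  have L0: "0 < L" using lpos e0 by (simp add: L_def)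
  have "openin (top_of_set {0..L}) {x\<in>{0..L}. (e0, x) \<in> U}"
    using gop e0 by (simp add: graph_open_def L_def)
  then obtain \<epsilon> where eps: "\<epsilon> > 0" "\<forall>x'\<in>{0..L}. dist x' x0 < \<epsilon> \<longrightarrow> x' \<in> {x\<in>{0..L}. (e0, x) \<in> U}"
    using ex0 x0 unfolding openin_euclidean_subtopology_iff L_def by blast
  define p where "p = max 0 (x0 - \<epsilon>/2)"
  define q where "q = min L (x0 + \<epsilon>/2)"
  have pq: "p < q" "0 \<le> p" "q \<le> L" using L0 x0 eps(1) by (auto simp: p_def q_def L_def)
  define I where "I = {p<..<q}"
  have oI: "open I" by (simp add: I_def)
  have I_sub: "x \<in> {0<..<L}" if "x \<in> I" for x using that pq by (auto simp: I_def)
  have I_U: "(e0, x) \<in> U" if "x \<in> I" for x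
  proof -
    have "dist x x0 < \<epsilon>" using that eps(1) by (auto simp: I_def p_def q_def dist_real_def)
    thus ?thesis using eps(2) I_sub[OF that] by auto
  qed
  have F0: "(\<Sum>i<M. b i * f (k i) e0 x) = 0" if "x \<in> I" for x
    using Z0 I_U[OF that] by (auto simp: b_def)
  define Lam where "Lam = (\<lambda>i. lam (k i)) ` {..<M}"
  define grp where "grp \<mu> = {i. i \<in> {..<M} \<and> lam (k i) = \<mu>}" for \<mu>
  define Gm where "Gm \<mu> e x = (\<Sum>i\<in>grp \<mu>. b i * f (k i) e x)" for \<mu> e x
  define Dm where "Dm \<mu> e x = (\<Sum>i\<in>grp \<mu>. b i * D (k i) e x)" for \<mu> e x
  define D2m where "D2m \<mu> e x = (\<Sum>i\<in>grp \<mu>. b i * D2 (k i) e x)" for \<mu> e x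
  have finLam: "finite Lam" by (simp add: Lam_def)
  have fingrp: "finite (grp \<mu>)" for \<mu> by (simp add: grp_def)
  have ED: "eig_data E src tgt len W (Gm \<mu>) \<mu> (Dm \<mu>) (D2m \<mu>)" for \<mu>
  proof -
    have "eig_data E src tgt len W (\<lambda>e x. \<Sum>i\<in>grp \<mu>. b i * f (k i) e x) \<mu>
          (\<lambda>e x. \<Sum>i\<in>grp \<mu>. b i * D (k i) e x) (\<lambda>e x. \<Sum>i\<in>grp \<mu>. b i * D2 (k i) e x)"
    proof (rule lincomb_data[OF fingrp])
      show "\<forall>i\<in>grp \<mu>. eig_data E src tgt len W (f (k i)) \<mu> (D (k i)) (D2 (k i))"
        using DD by (auto simp: grp_def)
    qed
    thus ?thesis by (simp add: Gm_def[abs_def] Dm_def[abs_def] D2m_def[abs_def])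
  qed
  have regroup: "(\<Sum>\<mu>\<in>Lam. Gm \<mu> e x) = (\<Sum>i<M. b i * f (k i) e x)" for e x
    unfolding Gm_def grp_def Lam_def by (rule sum.group) auto
  have EDe0: "(Gm \<mu> e0 has_real_derivative Dm \<mu> e0 x) (at x within {0..L}) \<and>
      (Dm \<mu> e0 has_real_derivative D2m \<mu> e0 x) (at x within {0..L}) \<and>
      D2m \<mu> e0 x = (W e0 x - \<mu>) * Gm \<mu> e0 x" if "x \<in> {0..L}" for \<mu> x
  proof -
    have "(Gm \<mu> e0 has_real_derivative Dm \<mu> e0 x) (at x within {0..L}) \<and>
      (Dm \<mu> e0 has_real_derivative D2m \<mu> e0 x) (at x within {0..L}) \<and>
      - D2m \<mu> e0 x + W e0 x * Gm \<mu> e0 x = \<mu> * Gm \<mu> e0 x"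
      using ED[of \<mu>] e0 that unfolding eig_data_def L_def by blast
    thus ?thesis by (auto simp: algebra_simps)
  qed
  have EDat: "(Gm \<mu> e0 has_real_derivative Dm \<mu> e0 x) (at x) \<and>
      (Dm \<mu> e0 has_real_derivative D2m \<mu> e0 x) (at x) \<and>
      D2m \<mu> e0 x = (W e0 x - \<mu>) * Gm \<mu> e0 x" if "x \<in> I" for \<mu> x
  proof -
    have "at x within {0..L} = at x" using I_sub[OF that] by (intro at_within_interior) auto
    thus ?thesis using EDe0[of x \<mu>] I_sub[OF that] by auto
  qed
  have sepr: "\<forall>\<mu>\<in>Lam. \<forall>x\<in>I. Gm \<mu> e0 x = 0"
  proof (rule separation[OF finLam _ oI, of id "\<lambda>\<mu>. Gm \<mu> e0" "\<lambda>\<mu>. Dm \<mu> e0" "\<lambda>\<mu>. D2m \<mu> e0" "W e0", simplified])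
    show "\<forall>s\<in>Lam. \<forall>x\<in>I. (Gm s e0 has_real_derivative Dm s e0 x) (at x) \<and>
            (Dm s e0 has_real_derivative D2m s e0 x) (at x) \<and> D2m s e0 x = (W e0 x - s) * Gm s e0 x"
      using EDat by blast
    show "\<forall>x\<in>I. (\<Sum>s\<in>Lam. Gm s e0 x) = 0" using F0 regroup by simp
  qed
  define \<mu>0 where "\<mu>0 = lam (k 0)"
  have mu0: "\<mu>0 \<in> Lam" using M0 by (simp add: Lam_def \<mu>0_def)
  define xm where "xm = (p + q) / 2"
  have xm: "xm \<in> I" using pq by (simp add: I_def xm_def)
  have contW: "continuous_on {0..L} (W e0)"
  proof -
    obtain DW where "\<forall>x\<in>{0..L}. (W e0 has_real_derivative DW x) (at x within {0..L})"
      using C1 e0 unfolding graph_C1_def L_def by blast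
    thus ?thesis by (intro DERIV_continuous_on) auto
  qed
  have dxm: "Dm \<mu>0 e0 xm = 0"
    using deriv_zero_open[OF oI xm _ conjunct1[OF EDat[OF xm]]] sepr mu0 by blast
  have zero_e0: "\<forall>x\<in>{0..L}. Gm \<mu>0 e0 x = 0"
  proof (rule ode_unique[OF contW])
    show "\<forall>x\<in>{0..L}. (Gm \<mu>0 e0 has_real_derivative Dm \<mu>0 e0 x) (at x within {0..L}) \<and>
        (Dm \<mu>0 e0 has_real_derivative D2m \<mu>0 e0 x) (at x within {0..L}) \<and>
        D2m \<mu>0 e0 x = (W e0 x - \<mu>0) * Gm \<mu>0 e0 x" using EDe0 by blast
    show "xm \<in> {0..L}" using I_sub[OF xm] by auto
    show "Gm \<mu>0 e0 xm = 0" using sepr mu0 xm by blast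
    show "Dm \<mu>0 e0 xm = 0" by (rule dxm)
  qed
  have allzero: "\<forall>e\<in>E. \<forall>x\<in>{0..len e}. Gm \<mu>0 e x = 0"
  proof (rule ccontr)
    assume nz: "\<not> ?thesis"
    hence eig: "is_eigenfunction E src tgt len W (Gm \<mu>0) \<mu>0"
      unfolding is_eigenfunction_alt using ED by blast
    have gv: "src e0 \<in> graph_vertices E src tgt" "tgt e0 \<in> graph_vertices E src tgt"
      using e0 by (auto simp: graph_vertices_def)
    have z0: "Gm \<mu>0 e0 0 = 0" "Gm \<mu>0 e0 (len e0) = 0" using zero_e0 L0 by (auto simp: L_def)
    have "\<not> 2 \<le> vdegree E src tgt (src e0)"
      using gen eig gv e0 z0 unfolding W_generic_def by blast
    moreover have "\<not> 2 \<le> vdegree E src tgt (tgt e0)"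
      using gen eig gv e0 z0 unfolding W_generic_def by blast
    ultimately have "E = {e0}" using single_edge[OF mg e0] by simp
    thus False using nz zero_e0 by (auto simp: L_def)
  qed
  have "l2_inner E len (Gm \<mu>0) (f (k 0)) = 0"
    unfolding l2_inner_def
  proof (rule sum.neutral, rule ballI)
    fix e assume e: "e \<in> E"
    have "integral {0..len e} (\<lambda>x. Gm \<mu>0 e x * f (k 0) e x) = integral {0..len e} (\<lambda>x. 0)"
      by (rule integral_cong) (use allzero e in auto)
    thus "integral {0..len e} (\<lambda>x. Gm \<mu>0 e x * f (k 0) e x) = 0" by simp
  qed
  moreover have "l2_inner E len (Gm \<mu>0) (f (k 0)) = (\<Sum>i\<in>grp \<mu>0. b i * l2_inner E len (f (k i)) (f (k 0)))"
    unfolding Gm_def[abs_def] by (rule l2_lin[OF fingrp]) (use cf in auto)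
  moreover have "(\<Sum>i\<in>grp \<mu>0. b i * l2_inner E len (f (k i)) (f (k 0))) = b 0 * l2_inner E len (f (k 0)) (f (k 0))"
  proof -
    have g0: "0 \<in> grp \<mu>0" using M0 by (simp add: grp_def \<mu>0_def)
    have "(\<Sum>i\<in>grp \<mu>0 - {0}. b i * l2_inner E len (f (k i)) (f (k 0))) = 0"
    proof (rule sum.neutral, rule ballI)
      fix i assume i: "i \<in> grp \<mu>0 - {0}"
      hence "k 0 < k i" using strict_mono_onD[OF smk, of 0 i] M0 by (auto simp: grp_def)
      thus "b i * l2_inner E len (f (k i)) (f (k 0)) = 0" using orth by simp
    qed
    thus ?thesis using sum.remove[OF fingrp g0, of "\<lambda>i. b i * l2_inner E len (f (k i)) (f (k 0))"] by simp
  qed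
  moreover have "0 < l2_inner E len (f (k 0)) (f (k 0))"
  proof -
    obtain e x where "e \<in> E" "x \<in> {0..len e}" "f (k 0) e x \<noteq> 0"
      using ES unfolding is_eigenfunction_def by blast
    thus ?thesis using l2_pos[OF finE _ _ _ lpos] cf by blast
  qed
  ultimately show False using bnz[OF M0] by simp
qed

end
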